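(* For every $\lambda\in\mathbb C^n$, the extended Cherednik kernel $G(\lambda,\cdot)$ is the unique holomorphic function $f$ on $\mathbb R^n+iV$ satisfying $D_\xi f=\langle\lambda,\xi\rangle f$ for all $\xi\in\mathbb R^n$ and $f(0)=1$.
   Context: Fix $k\ge0$. $\langle z,w\rangle=\sum z_iw_i$, $\underline1=(1,\dots,1)$, $s_{ij}$ the transposition of coordinates $i,j$. $\mathbb R^n_0=\{x\in\mathbb R^n:\sum x_i=0\}$, $\mathbb C^n_0=\mathbb R^n_0+i\mathbb R^n_0$, $\pi(z)=z-\frac1n\langle z,\underline1\rangle\underline1$ (orthogonal projection onto $\mathbb R^n_0$, extended $\mathbb C$-linearly), $\Omega=\{x\in\mathbb R^n_0:|x_i-x_j|<\pi\ \forall i<j\}$, $V=\Omega+\mathbb R\underline1$. Let $\rho=-\frac k2(n-1,n-3,\dots,-n+1)$. For $\xi\in\mathbb R^n$ the trigonometric Cherednik operator (acting on holomorphic functions on $\mathcal S_n$-invariant domains, $\partial_\xi$ complex directional derivative) is $D_\xi f(x)=\partial_\xi f(x)-\langle\rho,\xi\rangle f(x)+k\sum_{1\le i<j\le n}(\xi_j-\xi_i)\frac{f(x)-f(s_{ij}x)}{1-e^{-(x_j-x_i)}}$. By results of Opdam and Krötz–Opdam there is a unique function $G_0$, holomorphic on $\mathbb C^n_0\times(\mathbb R^n_0+i\Omega)$, such that for every $\lambda\in\mathbb C^n_0$: $D_\xi G_0(\lambda,\cdot)=\langle\lambda,\xi\rangle G_0(\lambda,\cdot)$ for all $\xi\in\mathbb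 R^n_0$ and $G_0(\lambda,0)=1$. The extended Cherednik kernel is $G(\lambda,z):=e^{\frac1n\langle z,\underline1\rangle\langle\lambda,\underline1\rangle}G_0(\pi(\lambda),\pi(z))$ for $\lambda\in\mathbb C^n$, $z\in\mathbb R^n+iV$. *)

theory Defs
  imports "HOL-Analysis.Analysis"
begin

text \<open>Coordinates are indexed by a finite linearly ordered type 'n, so n = CARD('n).
  The order on 'n fixes the labelling 1..n of the coordinates (needed for rho and i<j).\<close>

definition cidx :: "'n::{finite,linorder} \<Rightarrow> nat" where
  "cidx i = card {j. j < i}"   \<comment> \<open>0-based position of coordinate i\<close>

definition cinner :: "complex^'n::finite \<Rightarrow> complex^'n \<Rightarrow> complex" where
  "cinner z w = (\<Sum>i\<in>UNIV. z$i * w$i)"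

definition one_vec :: "complex^'n::finite" where
  "one_vec = (\<chi> i. 1)"

definition cvec :: "real^'n::finite \<Rightarrow> complex^'n" where
  "cvec x = (\<chi> i. complex_of_real (x$i))"

definition im_vec :: "complex^'n::finite \<Rightarrow> real^'n" where
  "im_vec z = (\<chi> i. Im (z$i))"

definition re_vec :: "complex^'n::finite \<Rightarrow> real^'n" where
  "re_vec z = (\<chi> i. Re (z$i))"

definition swapc :: "'n::finite \<Rightarrow> 'n \<Rightarrow> complex^'n \<Rightarrow> complex^'n" where
  "swapc i j z = (\<chi> l. if l = i then z$j else if l = j then z$i else z$l)"

definition R0 :: "(real^'n::finite) set" where
  "R0 = {x. (\<Sum>i\<in>UNIV. x$i) = 0}"

definition C0 :: "(complex^'n::finite) set" where
  "C0 = {z. (\<Sum>i\<in>UNIV. z$i) = 0}"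

definition proj0 :: "complex^'n::finite \<Rightarrow> complex^'n" where
  "proj0 z = z - (cinner z one_vec / of_nat CARD('n)) *s one_vec"

definition Omega :: "(real^'n::finite) set" where
  "Omega = {x \<in> R0. \<forall>i j. \<bar>x$i - x$j\<bar> < pi}"

definition Vset :: "(real^'n::finite) set" where
  "Vset = {w + t *\<^sub>R (\<chi> i. 1) | w t. w \<in> Omega}"

definition T0 :: "(complex^'n::finite) set" where
  "T0 = {z. re_vec z \<in> R0 \<and> im_vec z \<in> Omega}"

definition Tdom :: "(complex^'n::finite) set" where
  "Tdom = {z. im_vec z \<in> Vset}"

definition rho :: "real \<Rightarrow> real^'n::{finite,linorder}" where
  "rho k = (\<chi> i. -(k/2) * (real CARD('n) - 1 - 2 * real (cidx i)))"

text \<open>For open S this is usual holomorphy; for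
  S relatively open in the complex subspace C^n_0 it is holomorphy on that subspace.\<close>
definition holo_on :: "(complex^'n::finite) set \<Rightarrow> (complex^'n \<Rightarrow> complex) \<Rightarrow> bool" where
  "holo_on S f \<longleftrightarrow> (\<forall>z\<in>S. \<exists>L. (f has_derivative L) (at z within S) \<and>
       (\<forall>c v. L (c *s v) = c * L v))"

definition holo2_on :: "((complex^'n::finite) \<times> (complex^'n)) set
    \<Rightarrow> ((complex^'n) \<times> (complex^'n) \<Rightarrow> complex) \<Rightarrow> bool" where
  "holo2_on S f \<longleftrightarrow> (\<forall>p\<in>S. \<exists>L. (f has_derivative L) (at p within S) \<and>
       (\<forall>c v w. L (c *s v, c *s w) = c * L (v, w)))"

definition regular_pt :: "complex^'n::{finite,linorder} \<Rightarrow> bool" where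
  "regular_pt x \<longleftrightarrow> (\<forall>i j. i < j \<longrightarrow> 1 - exp (-(x$j - x$i)) \<noteq> 0)"

definition cherD :: "real \<Rightarrow> (real,'n::{finite,linorder}) vec \<Rightarrow> ((complex,'n) vec \<Rightarrow> complex)
    \<Rightarrow> (complex,'n) vec \<Rightarrow> complex" where
  "cherD k \<xi> f x =
     deriv (\<lambda>t. f (x + t *s cvec \<xi>)) 0
     - complex_of_real (rho k \<bullet> \<xi>) * f x
     + complex_of_real k * (\<Sum>(i,j)\<in>{(i,j). i < j}.
          complex_of_real (\<xi>$j - \<xi>$i) * (f x - f (swapc i j x)) / (1 - exp (-(x$j - x$i))))"

definition Gext :: "(complex^'n::finite \<Rightarrow> complex^'n \<Rightarrow> complex)
    \<Rightarrow> complex^'n \<Rightarrow> complex^'n \<Rightarrow> complex" where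
  "Gext G0 lam z = exp (cinner z one_vec * cinner lam one_vec / of_nat CARD('n))
                  * G0 (proj0 lam) (proj0 z)"

definition G0_props :: "real \<Rightarrow> ((complex,'n::{finite,linorder}) vec \<Rightarrow> (complex,'n) vec \<Rightarrow> complex) \<Rightarrow> bool" where
  "G0_props k H \<longleftrightarrow>
     holo2_on (C0 \<times> T0) (\<lambda>(l,z). H l z) \<and>
     (\<forall>l\<in>C0. (\<forall>\<xi>\<in>R0. \<forall>x\<in>T0. regular_pt x \<longrightarrow> cherD k \<xi> (H l) x = cinner l (cvec \<xi>) * H l x)
              \<and> H l 0 = 1)"

end

theory Submission
  imports Defs "HOL-Analysis.Analysis"
begin

lemma Tdom_char: "z \<in> Tdom \<longleftrightarrow> (\<forall>i j. \<bar>Im (z$i) - Im (z$j)\<bar> < pi)"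
proof
  assume "z \<in> Tdom"
  then obtain w t where "im_vec z = w + t *\<^sub>R (\<chi> i. 1)" "w \<in> Omega"
    unfolding Tdom_def Vset_def by auto
  then show "\<forall>i j. \<bar>Im (z$i) - Im (z$j)\<bar> < pi"
    unfolding Omega_def im_vec_def by (auto simp: vec_eq_iff)
next
  assume H: "\<forall>i j. \<bar>Im (z$i) - Im (z$j)\<bar> < pi"
  define t where "t = (\<Sum>i\<in>UNIV. Im (z$i)) / real CARD('a)"
  define w where "w = im_vec z - t *\<^sub>R (\<chi> i. 1)"
  have "w \<in> R0" unfolding R0_def w_def t_def im_vec_def
    by (simp add: sum_subtractf)
  moreover have "\<forall>i j. \<bar>w$i - w$j\<bar> < pi" using H unfolding w_def im_vec_def by auto
  ultimately have "w \<in> Omega" unfolding Omega_def by auto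
  moreover have "im_vec z = w + t *\<^sub>R (\<chi> i. 1)" unfolding w_def by simp
  ultimately show "z \<in> Tdom" unfolding Tdom_def Vset_def by blast
qed

lemma open_Tdom: "open (Tdom :: (complex^'n::finite) set)"
proof -
  have "(Tdom :: (complex^'n) set) = (\<Inter>i. \<Inter>j. {z. \<bar>Im (z$i) - Im (z$j)\<bar> < pi})"
    by (auto simp: Tdom_char)
  also have "open \<dots>"
    by (intro open_INT ballI open_Collect_less continuous_intros) auto
  finally show ?thesis .
qed

lemma T0_eq: "T0 = C0 \<inter> Tdom"
  by (auto simp: T0_def C0_def Tdom_char Omega_def R0_def re_vec_def im_vec_def complex_eq_iff)

lemma swapc_nth: "swapc i j z $ l = z $ Transposition.transpose i j l"
  by (simp add: swapc_def transpose_def)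

lemma swapc_swapc[simp]: "swapc i j (swapc i j z) = z"
  by (simp add: vec_eq_iff swapc_nth)

lemma sum_transpose: "(\<Sum>l\<in>UNIV. f (Transposition.transpose i j l)) = (\<Sum>l\<in>UNIV. f l)"
  by (rule sum.reindex_bij_witness[of _ "Transposition.transpose i j" "Transposition.transpose i j"]) auto

lemma swapc_Tdom: "z \<in> Tdom \<Longrightarrow> swapc i j z \<in> Tdom"
  by (simp add: Tdom_char swapc_nth)

lemma zero_Tdom: "0 \<in> Tdom"
  by (simp add: Tdom_char)

lemma scale_Tdom: "z \<in> Tdom \<Longrightarrow> 0 \<le> t \<Longrightarrow> t \<le> 1 \<Longrightarrow> (complex_of_real t) *s z \<in> Tdom"
proof -
  assume "z \<in> Tdom" "0 \<le> t" "t \<le> 1"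
  then have "\<bar>Im (z$i) - Im (z$j)\<bar> < pi" for i j by (simp add: Tdom_char)
  moreover have "\<bar>t * Im (z$i) - t * Im (z$j)\<bar> \<le> \<bar>Im (z$i) - Im (z$j)\<bar>" for i j
  proof -
    have "\<bar>t * Im (z$i) - t * Im (z$j)\<bar> = t * \<bar>Im (z$i) - Im (z$j)\<bar>"
      using \<open>0 \<le> t\<close> by (simp add: abs_mult right_diff_distrib[symmetric])
    also have "\<dots> \<le> \<bar>Im (z$i) - Im (z$j)\<bar>" using \<open>t \<le> 1\<close> \<open>0 \<le> t\<close>
      by (simp add: mult_left_le_one_le)
    finally show ?thesis .
  qed
  ultimately have "\<forall>i j. \<bar>t * Im (z$i) - t * Im (z$j)\<bar> < pi" by (meson le_less_trans)
  then show ?thesis by (simp add: Tdom_char)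
qed

lemma one_vec_nth[simp]: "(one_vec::complex^'n::finite) $ i = 1"
  by (simp add: one_vec_def)

lemma cinner_one: "cinner (z::complex^'n::finite) one_vec = (\<Sum>i\<in>UNIV. z$i)"
  by (simp add: cinner_def one_vec_def)

lemma cinner_swapc_one: "cinner (swapc i j z) one_vec = cinner z one_vec"
  by (simp add: cinner_one swapc_nth sum_transpose[where f="\<lambda>l. z$l"])

lemma proj0_nth: "proj0 z $ l = z $ l - (\<Sum>i\<in>UNIV. z$i) / of_nat CARD('n)"
  for z :: "complex^'n::finite"
  by (simp add: proj0_def cinner_one)

lemma proj0_C0: "proj0 (z::complex^'n::finite) \<in> C0"
proof -
  have "(\<Sum>l\<in>UNIV. proj0 z $ l) = (\<Sum>i\<in>UNIV. z$i) - of_nat CARD('n) * ((\<Sum>i\<in>UNIV. z$i) / of_nat CARD('n))"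
    by (simp add: proj0_nth sum_subtractf)
  also have "\<dots> = 0" by simp
  finally show ?thesis by (simp add: C0_def)
qed

lemma proj0_Tdom: "z \<in> Tdom \<Longrightarrow> proj0 z \<in> Tdom"
  by (simp add: Tdom_char proj0_nth)

lemma proj0_T0: "z \<in> Tdom \<Longrightarrow> proj0 z \<in> T0"
  by (simp add: T0_eq proj0_C0 proj0_Tdom)

lemma proj0_scale: "proj0 (c *s z) = c *s proj0 z"
  by (simp add: vec_eq_iff proj0_nth sum_distrib_left[symmetric] algebra_simps)

lemma proj0_add: "proj0 (z + w) = proj0 z + proj0 w"
  by (simp add: vec_eq_iff proj0_nth sum.distrib add_divide_distrib)

lemma proj0_diff: "proj0 (z - w) = proj0 z - proj0 w"
  by (simp add: vec_eq_iff proj0_nth sum_subtractf diff_divide_distrib)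

lemma proj0_zero[simp]: "proj0 0 = 0"
  by (simp add: vec_eq_iff proj0_nth)

lemma proj0_swapc: "proj0 (swapc i j z) = swapc i j (proj0 z)"
  by (simp add: vec_eq_iff proj0_nth swapc_nth sum_transpose[where f="\<lambda>l. z$l"])

lemma proj0_C0_id: "z \<in> C0 \<Longrightarrow> proj0 z = z"
  by (simp add: vec_eq_iff proj0_nth C0_def)

lemma scaleR_cvec_eq: "r *\<^sub>R (x::complex^'n::finite) = complex_of_real r *s x"
  by (simp add: vec_eq_iff scaleR_conv_of_real[where 'a=complex])

lemma linear_proj0: "linear proj0"
  by (rule linearI) (simp_all add: proj0_add scaleR_cvec_eq proj0_scale)

lemma bl_smul: "bounded_linear (\<lambda>t::complex. t *s (d::complex^'n::finite))"
proof -
  have "linear (\<lambda>t::complex. t *s d)"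
    by (rule linearI) (simp_all add: vec_eq_iff algebra_simps scaleR_conv_of_real[where 'a=complex])
  then show ?thesis by (simp add: linear_conv_bounded_linear)
qed

lemma bl_cinner_one: "bounded_linear (\<lambda>v::complex^'n::finite. cinner v one_vec * c)"
proof -
  have "linear (\<lambda>v::complex^'n::finite. cinner v one_vec * c)"
    by (rule linearI) (simp_all add: cinner_one sum.distrib algebra_simps scaleR_conv_of_real[where 'a=complex] sum_distrib_left)
  then show ?thesis by (simp add: linear_conv_bounded_linear)
qed

lemma line_has_derivative:
  "((\<lambda>t::complex. x + t *s (d::complex^'n::finite)) has_derivative (\<lambda>t. t *s d)) F"
  using has_derivative_add[OF has_derivative_const bounded_linear.has_derivative[OF bl_smul, of "\<lambda>t. t" "\<lambda>t. t"]]
  by (simp add: has_derivative_ident)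

lemma dir_field_deriv:
  fixes h :: "complex^'n::finite \<Rightarrow> complex"
  assumes "(h has_derivative L) (at (x + t0 *s d))" and "\<And>c v. L (c *s v) = c * L v"
  shows "((\<lambda>t. h (x + t *s d)) has_field_derivative L d) (at t0)"
proof -
  have "((\<lambda>t. h (x + t *s d)) has_derivative (\<lambda>t. L (t *s d))) (at t0)"
    using has_derivative_compose[OF line_has_derivative assms(1)] by (simp add: o_def)
  moreover have "(\<lambda>t. L (t *s d)) = (\<lambda>t. L d * t)" using assms(2) by (auto simp: mult.commute)
  ultimately show ?thesis by (simp add: has_field_derivative_def)
qed

lemma dir_deriv:
  fixes h :: "complex^'n::finite \<Rightarrow> complex"
  assumes "(h has_derivative L) (at x)" and "\<And>c v. L (c *s v) = c * L v"
  shows "deriv (\<lambda>t. h (x + t *s d)) 0 = L d"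
  using dir_field_deriv[of h L x 0 d] assms by (simp add: DERIV_imp_deriv)

lemma pair_dir_field_deriv:
  fixes F :: "(complex^'n::finite) \<times> (complex^'n) \<Rightarrow> complex"
  assumes "(F has_derivative L) (at (a, y) within S)"
    and "\<And>c v w. L (c *s v, c *s w) = c * L (v, w)"
    and "open U" "0 \<in> U" "\<And>t. t \<in> U \<Longrightarrow> (a, y + t *s d) \<in> S"
  shows "((\<lambda>t. F (a, y + t *s d)) has_field_derivative L (0, d)) (at 0)"
proof -
  have p: "((\<lambda>t. (a, y + t *s d)) has_derivative (\<lambda>t. (0, t *s d))) (at 0 within U)"
    by (intro has_derivative_Pair has_derivative_const line_has_derivative)
  have "(F has_derivative L) (at ((\<lambda>t. (a, y + t *s d)) 0) within (\<lambda>t. (a, y + t *s d)) ` U)"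
    by (simp, rule has_derivative_subset[OF assms(1)]) (use assms(5) in auto)
  from diff_chain_within[OF p this]
  have "((\<lambda>t. F (a, y + t *s d)) has_derivative (\<lambda>t. L (0, t *s d))) (at 0)"
    using at_within_open[OF assms(4,3)] by (simp add: o_def)
  moreover have "L (0, t *s d) = t * L (0, d)" for t
    using assms(2)[of t 0 d] by simp
  then have "(\<lambda>t. L (0, t *s d)) = (\<lambda>t. L (0, d) * t)" by (auto simp: mult.commute)
  ultimately show ?thesis by (simp add: has_field_derivative_def)
qed

definition ce :: "complex^'n::finite \<Rightarrow> complex^'n \<Rightarrow> complex" where
  "ce lam z = cinner z one_vec * (cinner lam one_vec / of_nat CARD('n))"

lemma Gext_ce: "Gext G0 lam z = exp (ce lam z) * G0 (proj0 lam) (proj0 z)"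
  by (simp add: Gext_def ce_def)

lemma ce_scale: "ce lam (c *s v) = c * ce lam v"
  unfolding ce_def cinner_one by (simp add: sum_distrib_left[symmetric] algebra_simps)

lemma ce_has_derivative: "(ce lam has_derivative ce lam) F"
  unfolding ce_def[abs_def] by (rule bounded_linear.has_derivative[OF bl_cinner_one]) (rule has_derivative_ident)

lemma exp_ce_has_derivative:
  "((\<lambda>z. exp (ce lam z)) has_derivative (\<lambda>v. exp (ce lam x) * ce lam v)) (at x)"
proof -
  have e: "(exp has_derivative (*) (exp (ce lam x))) (at (ce lam x))"
    using DERIV_exp[of "ce lam x"] by (simp add: has_field_derivative_def)
  show ?thesis using has_derivative_compose[OF ce_has_derivative e] by simp
qed

lemma bl_proj0: "bounded_linear proj0"
  using linear_proj0 by (simp add: linear_conv_bounded_linear)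

lemma Gext_has_deriv:
  assumes H: "holo2_on (C0 \<times> T0) (\<lambda>(l,z). G0 l z)" and x: "x \<in> Tdom"
  obtains L0 where "((\<lambda>(l,z). G0 l z) has_derivative L0) (at (proj0 lam, proj0 x) within C0 \<times> T0)"
    "\<And>c v w. L0 (c *s v, c *s w) = c * L0 (v,w)"
    "(Gext G0 lam has_derivative
       (\<lambda>v. exp (ce lam x) * L0 (0, proj0 v) + exp (ce lam x) * ce lam v * G0 (proj0 lam) (proj0 x))) (at x)"
proof -
  have p: "(proj0 lam, proj0 x) \<in> C0 \<times> T0" using x by (simp add: proj0_C0 proj0_T0)
  from H p obtain L0 where L0: "((\<lambda>(l,z). G0 l z) has_derivative L0) (at (proj0 lam, proj0 x) within C0 \<times> T0)"
    "\<And>c v w. L0 (c *s v, c *s w) = c * L0 (v,w)"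
    unfolding holo2_on_def by blast
  have P: "((\<lambda>z. (proj0 lam, proj0 z)) has_derivative (\<lambda>v. (0, proj0 v))) (at x within Tdom)"
    by (intro has_derivative_Pair has_derivative_const bounded_linear.has_derivative[OF bl_proj0] has_derivative_ident)
  have L0': "((\<lambda>(l,z). G0 l z) has_derivative L0) (at (proj0 lam, proj0 x) within (\<lambda>z. (proj0 lam, proj0 z)) ` Tdom)"
    by (rule has_derivative_subset[OF L0(1)]) (auto simp: proj0_C0 proj0_T0)
  from diff_chain_within[OF P L0']
  have "((\<lambda>z. G0 (proj0 lam) (proj0 z)) has_derivative (\<lambda>v. L0 (0, proj0 v))) (at x)"
    using at_within_open[OF x open_Tdom] by (simp add: o_def)
  from has_derivative_mult[OF exp_ce_has_derivative this]
  have "(Gext G0 lam has_derivative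
       (\<lambda>v. exp (ce lam x) * L0 (0, proj0 v) + exp (ce lam x) * ce lam v * G0 (proj0 lam) (proj0 x))) (at x)"
    by (simp add: Gext_ce[abs_def])
  then show ?thesis by (rule that[OF L0(1) L0(2)])
qed

lemma Gext_holo:
  fixes G0 :: "(complex,'n::finite) vec \<Rightarrow> (complex,'n) vec \<Rightarrow> complex" and lam :: "(complex,'n) vec"
  assumes H: "holo2_on (C0 \<times> T0) (\<lambda>(l,z). G0 l z)"
  shows "holo_on Tdom (Gext G0 lam)"
  unfolding holo_on_def
proof
  fix x :: "complex^'n" assume x: "x \<in> Tdom"
  obtain L0 where L00: "((\<lambda>(l,z). G0 l z) has_derivative L0) (at (proj0 lam, proj0 x) within C0 \<times> T0)" and L0: "\<And>c v w. L0 (c *s v, c *s w) = c * L0 (v,w)"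
    "(Gext G0 lam has_derivative
       (\<lambda>v. exp (ce lam x) * L0 (0, proj0 v) + exp (ce lam x) * ce lam v * G0 (proj0 lam) (proj0 x))) (at x)"
  proof -
    from Gext_has_deriv[where lam=lam, OF H x] show thesis using that by blast
  qed
  have h1: "L0 (0, proj0 (c *s v)) = c * L0 (0, proj0 v)" for c v
    using L0(1)[of c 0 "proj0 v"] by (simp add: proj0_scale)
  define L where "L = (\<lambda>v. exp (ce lam x) * L0 (0, proj0 v) + exp (ce lam x) * ce lam v * G0 (proj0 lam) (proj0 x))"
  have "L (c *s v) = c * L v" for c v
    unfolding L_def h1 ce_scale by (simp add: algebra_simps)
  moreover have "(Gext G0 lam has_derivative L) (at x within Tdom)"
    using L0(2) unfolding L_def by (rule has_derivative_at_withinI)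
  ultimately show "\<exists>L. (Gext G0 lam has_derivative L) (at x within Tdom) \<and> (\<forall>c v. L (c *s v) = c * L v)"
    by blast
qed

lemma cidx_less: "i < j \<Longrightarrow> cidx i < cidx (j::'n::{finite,linorder})"
  unfolding cidx_def by (rule psubset_card_mono) auto

lemma cidx_inj: "inj (cidx :: 'n::{finite,linorder} \<Rightarrow> nat)"
  by (metis cidx_less injI less_irrefl neqE)

lemma cidx_bound: "cidx (i::'n::{finite,linorder}) < CARD('n)"
  unfolding cidx_def by (rule psubset_card_mono) auto

lemma cidx_image: "cidx ` (UNIV :: 'n::{finite,linorder} set) = {..<CARD('n)}"
proof -
  have "cidx ` (UNIV :: 'n set) \<subseteq> {..<CARD('n)}" using cidx_bound by auto
  moreover have "card (cidx ` (UNIV :: 'n set)) = card {..<CARD('n)}"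
    using card_image[OF cidx_inj] by simp
  ultimately show ?thesis by (intro card_subset_eq) auto
qed

lemma gauss2: "2 * (\<Sum>m<n. real m) = real n * (real n - 1)"
  by (induction n) (auto simp: algebra_simps)

lemma sum_cidx: "2 * (\<Sum>i\<in>(UNIV::'n::{finite,linorder} set). real (cidx i)) = real CARD('n) * (real CARD('n) - 1)"
proof -
  have "(\<Sum>i\<in>(UNIV::'n set). real (cidx i)) = (\<Sum>m\<in>cidx ` (UNIV::'n set). real m)"
    by (simp add: sum.reindex[OF cidx_inj])
  then show ?thesis by (simp add: cidx_image gauss2)
qed

lemma rho_nth: "rho k $ i = -(k/2) * (real CARD('n) - 1 - 2 * real (cidx (i::'n::{finite,linorder})))"
  by (simp add: rho_def)

lemma rho_sum: "(\<Sum>i\<in>UNIV. rho k $ (i::'n::{finite,linorder})) = 0"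
proof -
  have e1: "(\<Sum>i\<in>UNIV. rho k $ (i::'n)) = -(k/2) * (\<Sum>i\<in>UNIV. (real CARD('n) - 1 - 2 * real (cidx (i::'n))))"
    by (simp only: rho_nth sum_distrib_left[symmetric])
  have e2: "(\<Sum>i\<in>(UNIV::'n set). (real CARD('n) - 1 - 2 * real (cidx i))) = real CARD('n) * (real CARD('n) - 1) - 2 * (\<Sum>i\<in>(UNIV::'n set). real (cidx i))"
    by (simp add: sum_subtractf sum_distrib_left)
  show ?thesis unfolding e1 e2 sum_cidx by simp
qed

definition xi0 :: "real^'n::finite \<Rightarrow> real^'n" where
  "xi0 \<xi> = \<xi> - ((\<Sum>i\<in>UNIV. \<xi>$i) / real CARD('n)) *\<^sub>R (\<chi> i. 1)"

lemma cvec_xi0: "cvec (xi0 \<xi>) = proj0 (cvec \<xi>)"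
  by (simp add: vec_eq_iff cvec_def xi0_def proj0_nth)

lemma xi0_R0: "xi0 \<xi> \<in> R0"
  by (simp add: R0_def xi0_def sum_subtractf)

lemma xi0_diff: "xi0 \<xi> $ j - xi0 \<xi> $ i = \<xi>$j - \<xi>$i"
  by (simp add: xi0_def)

lemma rho_xi0: "rho k \<bullet> xi0 \<xi> = rho k \<bullet> (\<xi>::real^'n::{finite,linorder})"
proof -
  define c where "c = (\<Sum>i\<in>UNIV. \<xi>$i) / real CARD('n)"
  have "xi0 \<xi> = \<xi> - c *\<^sub>R (\<chi> i. 1)" by (simp add: xi0_def c_def)
  then have "rho k \<bullet> xi0 \<xi> = rho k \<bullet> \<xi> - (\<Sum>i\<in>UNIV. rho k $ (i::'n)) * c"
    by (simp add: inner_vec_def right_diff_distrib sum_subtractf sum_distrib_right)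
  then show ?thesis by (simp add: rho_sum)
qed

lemma proj0_diff_nth: "proj0 x $ j - proj0 x $ i = x$j - x$i"
  by (simp add: proj0_nth)

lemma regular_proj0: "regular_pt (proj0 x) = regular_pt x"
  by (simp add: regular_pt_def proj0_diff_nth)

lemma cinner_proj0: "cinner (proj0 l) w = cinner l w - ((\<Sum>i\<in>UNIV. l$i) / of_nat CARD('n)) * (\<Sum>i\<in>UNIV. w$i)"
  for l :: "complex^'n::finite"
  by (simp add: cinner_def proj0_nth left_diff_distrib sum_subtractf sum_distrib_left)

lemma cinner_proj0_C0: "w \<in> C0 \<Longrightarrow> cinner (proj0 l) w = cinner l w"
  by (simp add: cinner_proj0 C0_def)

lemma cinner_l_proj0: "cinner l (proj0 w) = cinner l w - ce l w"
  by (simp add: cinner_def proj0_nth ce_def cinner_one right_diff_distrib sum_subtractf sum_distrib_left sum_distrib_right sum_divide_distrib mult.commute)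

lemma ce_swapc: "ce l (swapc i j x) = ce l x"
  by (simp add: ce_def cinner_swapc_one)

lemma C0_add_scale: "y \<in> C0 \<Longrightarrow> d \<in> C0 \<Longrightarrow> y + t *s d \<in> C0"
  by (simp add: C0_def sum.distrib sum_distrib_left[symmetric])

lemma open_line_pre:
  fixes d :: "complex^'n::finite"
  shows "open {t::complex. y + t *s d \<in> Tdom}"
proof -
  have "continuous_on UNIV (\<lambda>t::complex. y + t *s (d::complex^'n::finite))"
    by (intro continuous_on_add continuous_on_const linear_continuous_on bl_smul)
  from continuous_on_open_vimage[of UNIV, THEN iffD1, OF open_UNIV this, rule_format, OF open_Tdom]
  show ?thesis by (simp add: vimage_def)
qed

lemma Gext_eigen:
  fixes G0 :: "(complex,'n::{finite,linorder}) vec \<Rightarrow> (complex,'n) vec \<Rightarrow> complex"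
    and lam :: "(complex,'n) vec" and x :: "(complex,'n) vec"
  assumes G: "G0_props k G0" and x: "x \<in> Tdom" and reg: "regular_pt x"
  shows "cherD k \<xi> (Gext G0 lam) x = cinner lam (cvec \<xi>) * Gext G0 lam x"
proof -
  have H: "holo2_on (C0 \<times> T0) (\<lambda>(l,z). G0 l z)" using G by (simp add: G0_props_def)
  define y where "y = proj0 x"
  define l0 where "l0 = proj0 lam"
  define d where "d = cvec \<xi>"
  define d0 where "d0 = cvec (xi0 \<xi>)"
  define e where "e = exp (ce lam x)"
  have d0p: "d0 = proj0 d" by (simp add: d0_def d_def cvec_xi0)
  have d0C: "d0 \<in> C0" by (simp add: d0p proj0_C0)
  have yT: "y \<in> T0" using x by (simp add: y_def proj0_T0)
  have yC: "y \<in> C0" by (simp add: y_def proj0_C0)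
  have l0C: "l0 \<in> C0" by (simp add: l0_def proj0_C0)
  have yreg: "regular_pt y" using reg by (simp add: y_def regular_proj0)
  obtain L0 where L00: "((\<lambda>(l,z). G0 l z) has_derivative L0) (at (proj0 lam, proj0 x) within C0 \<times> T0)"
    and L0: "\<And>c v w. L0 (c *s v, c *s w) = c * L0 (v,w)"
    and LG: "(Gext G0 lam has_derivative
       (\<lambda>v. exp (ce lam x) * L0 (0, proj0 v) + exp (ce lam x) * ce lam v * G0 (proj0 lam) (proj0 x))) (at x)"
  proof -
    from Gext_has_deriv[where lam=lam, OF H x] show thesis using that by blast
  qed
  have h1: "L0 (0, proj0 (c *s v)) = c * L0 (0, proj0 v)" for c v
    using L0[of c 0 "proj0 v"] by (simp add: proj0_scale)
  have LGhom: "exp (ce lam x) * L0 (0, proj0 (c *s v)) + exp (ce lam x) * ce lam (c *s v) * G0 (proj0 lam) (proj0 x)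
     = c * (exp (ce lam x) * L0 (0, proj0 v) + exp (ce lam x) * ce lam v * G0 (proj0 lam) (proj0 x))" for c v
    unfolding h1 ce_scale by (simp add: algebra_simps)
  have dG: "deriv (\<lambda>t. Gext G0 lam (x + t *s d)) 0 = e * L0 (0, d0) + e * ce lam d * G0 l0 y"
    using dir_deriv[OF LG, of d] LGhom by (simp add: e_def d0p l0_def y_def)
  have dG0: "deriv (\<lambda>t. G0 l0 (y + t *s d0)) 0 = L0 (0, d0)"
  proof -
    have "((\<lambda>t. (\<lambda>(l,z). G0 l z) (l0, y + t *s d0)) has_field_derivative L0 (0, d0)) (at 0)"
    proof (rule pair_dir_field_deriv[OF _ L0 open_line_pre])
      show "((\<lambda>(l,z). G0 l z) has_derivative L0) (at (l0, y) within C0 \<times> T0)"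
        using L00 by (simp add: l0_def y_def)
      show "0 \<in> {t. y + t *s d0 \<in> Tdom}" using yT by (simp add: T0_eq)
      show "(l0, y + t *s d0) \<in> C0 \<times> T0" if "t \<in> {t. y + t *s d0 \<in> Tdom}" for t
        using that l0C C0_add_scale[OF yC d0C] by (simp add: T0_eq)
    qed
    then show ?thesis by (simp add: DERIV_imp_deriv)
  qed
  have eig0: "cherD k (xi0 \<xi>) (G0 l0) y = cinner l0 (cvec (xi0 \<xi>)) * G0 l0 y"
    using G l0C yT yreg xi0_R0 unfolding G0_props_def by blast
  have Gx: "Gext G0 lam x = e * G0 l0 y" by (simp add: Gext_ce e_def l0_def y_def)
  have sw: "Gext G0 lam (swapc i j x) = e * G0 l0 (swapc i j y)" for i j
    by (simp add: Gext_ce e_def l0_def y_def ce_swapc proj0_swapc)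
  have ydiff: "y$j - y$i = x$j - x$i" for i j by (simp add: y_def proj0_diff_nth)
  have sumeq: "(\<Sum>(i,j)\<in>{(i,j). i < j}. complex_of_real (\<xi>$j - \<xi>$i) * (Gext G0 lam x - Gext G0 lam (swapc i j x)) / (1 - exp (-(x$j - x$i))))
     = e * (\<Sum>(i,j)\<in>{(i,j). i < j}. complex_of_real (xi0 \<xi>$j - xi0 \<xi>$i) * (G0 l0 y - G0 l0 (swapc i j y)) / (1 - exp (-(y$j - y$i))))"
    unfolding sum_distrib_left
  proof (rule sum.cong[OF refl])
    fix p assume "p \<in> {(i,j). i < (j::'n)}"
    obtain i j where p: "p = (i,j)" by fastforce
    show "(case p of (i,j) \<Rightarrow> complex_of_real (\<xi>$j - \<xi>$i) * (Gext G0 lam x - Gext G0 lam (swapc i j x)) / (1 - exp (-(x$j - x$i))))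
      = e * (case p of (i,j) \<Rightarrow> complex_of_real (xi0 \<xi>$j - xi0 \<xi>$i) * (G0 l0 y - G0 l0 (swapc i j y)) / (1 - exp (-(y$j - y$i))))"
      unfolding p by (simp add: ydiff xi0_diff Gx sw algebra_simps)
  qed
  have "cherD k \<xi> (Gext G0 lam) x = e * (L0 (0, d0) - complex_of_real (rho k \<bullet> xi0 \<xi>) * G0 l0 y
      + complex_of_real k * (\<Sum>(i,j)\<in>{(i,j). i < j}. complex_of_real (xi0 \<xi>$j - xi0 \<xi>$i) * (G0 l0 y - G0 l0 (swapc i j y)) / (1 - exp (-(y$j - y$i)))))
      + e * ce lam d * G0 l0 y"
    unfolding cherD_def d_def[symmetric] dG sumeq rho_xi0 by (simp add: Gx algebra_simps)
  also have "\<dots> = e * (cinner l0 (cvec (xi0 \<xi>)) * G0 l0 y) + e * ce lam d * G0 l0 y"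
    using eig0 unfolding cherD_def d0_def[symmetric] dG0 by simp
  also have "\<dots> = cinner lam (cvec \<xi>) * Gext G0 lam x"
    using cinner_proj0_C0[OF d0C, of lam] cinner_l_proj0[of lam d]
    by (simp add: Gx l0_def d0_def[symmetric] d0p[symmetric] d_def[symmetric] algebra_simps)
      (metis distrib_left distrib_right)
  finally show ?thesis .
qed

lemma re_PQ_nonneg:
  fixes w :: complex
  assumes F1: "exp w \<noteq> 1" and b: "\<bar>Im w\<bar> \<le> pi"
  shows "Re (w * (exp w + 1) / (exp w - 1)) \<ge> 0"
proof -
  define a where "a = Re w"
  define c where "c = Im w"
  define F where "F = exp w"
  have ReF: "Re F = exp a * cos c" and ImF: "Im F = exp a * sin c"
    by (simp_all add: F_def a_def c_def Re_exp Im_exp)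
  have sq: "(Re F)^2 + (Im F)^2 = (exp a)^2"
  proof -
    have "(Re F)^2 + (Im F)^2 = (exp a)^2 * (cos c)^2 + (exp a)^2 * (sin c)^2"
      unfolding ReF ImF by (simp add: power_mult_distrib)
    also have "\<dots> = (exp a)^2 * ((sin c)^2 + (cos c)^2)" by (metis distrib_left add.commute)
    also have "\<dots> = (exp a)^2" by simp
    finally show ?thesis .
  qed
  have num: "Re (w * (F + 1)) * Re (F - 1) + Im (w * (F + 1)) * Im (F - 1)
        = a * ((Re F)^2 + (Im F)^2 - 1) + 2 * c * Im F"
    by (simp add: a_def c_def power2_eq_square algebra_simps)
  have t1: "a * ((exp a)^2 - 1) \<ge> 0"
  proof (cases "a \<ge> 0")
    case True
    then have "exp a \<ge> 1" by simp
    then have "(exp a)^2 \<ge> 1" by (simp add: one_le_power)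
    with True show ?thesis by simp
  next
    case False
    then have "exp a < 1" "exp a > 0" by simp_all
    then have "(exp a)^2 < 1" by (simp add: power_less_one_iff) 
    with False show ?thesis by (simp add: mult_nonpos_nonpos)
  qed
  have t2: "c * sin c \<ge> 0"
  proof (cases "c \<ge> 0")
    case True
    then have "sin c \<ge> 0" using b by (intro sin_ge_zero) (auto simp: c_def)
    with True show ?thesis by simp
  next
    case False
    then have "sin (-c) \<ge> 0" using b by (intro sin_ge_zero) (auto simp: c_def)
    then have "sin c \<le> 0" by simp
    with False show ?thesis by (simp add: mult_nonpos_nonpos)
  qed
  have "2 * c * Im F = 2 * exp a * (c * sin c)" by (simp add: ImF)
  also have "\<dots> \<ge> 0" using t2 by simp
  finally have "Re (w * (F + 1)) * Re (F - 1) + Im (w * (F + 1)) * Im (F - 1) \<ge> 0"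
    unfolding num sq using t1 by simp
  then show ?thesis
    by (simp add: Re_divide F_def[symmetric] divide_nonneg_nonneg)
qed

lemma inner_mult_self: "((m::complex) * d) \<bullet> d = Re m * (d \<bullet> d)"
  by (simp add: inner_complex_def algebra_simps)

lemma pair_bound:
  fixes w a b :: complex
  assumes E1: "exp (-w) \<noteq> 1" and F1: "exp w \<noteq> 1" and b: "\<bar>Im w\<bar> \<le> pi"
  shows "(w * (a - b) / (1 - exp (-w))) \<bullet> a + ((-w) * (b - a) / (1 - exp w)) \<bullet> b
           \<ge> -(cmod w) * (a \<bullet> a + b \<bullet> b)"
proof -
  define F where "F = exp w"
  have F0: "F \<noteq> 0" by (simp add: F_def)
  have F1': "F - 1 \<noteq> 0" using F1 by (simp add: F_def)
  have eF: "exp (-w) = 1 / F" by (simp add: F_def exp_minus divide_inverse)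
  define P where "P = w / (1 - exp (-w))"
  define Q where "Q = (-w) / (1 - exp w)"
  have hP: "P = w * F / (F - 1)"
  proof -
    have "1 - 1 / F = (F - 1) / F" using F0 by (simp add: field_simps)
    then show ?thesis unfolding P_def eF using F0 F1' by (simp add: field_simps)
  qed
  have hQ: "Q = w / (F - 1)"
  proof -
    have "1 - F = -(F - 1)" by simp
    then show ?thesis unfolding Q_def F_def[symmetric] using F1' by (simp add: field_simps)
  qed
  have PQ1: "P - Q = w"
  proof -
    have "P - Q = (w * F - w) / (F - 1)" unfolding hP hQ by (simp add: diff_divide_distrib)
    also have "w * F - w = w * (F - 1)" by (simp add: algebra_simps)
    finally show ?thesis using F1' by simp
  qed
  have PQ2: "P + Q = w * (F + 1) / (F - 1)"
  proof -
    have "P + Q = (w * F + w) / (F - 1)" unfolding hP hQ by (simp add: add_divide_distrib)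
    also have "w * F + w = w * (F + 1)" by (simp add: algebra_simps)
    finally show ?thesis .
  qed
  define m where "m = (P + Q) / 2"
  have m0: "Re m \<ge> 0"
  proof -
    have "Re m = Re (w * (F + 1) / (F - 1)) / 2" unfolding m_def PQ2 by (rule Re_divide_numeral)
    then show ?thesis using re_PQ_nonneg[OF F1 b] unfolding F_def by simp
  qed
  have Pm: "P = m + w/2" and Qm: "Q = m - w/2" using PQ1 unfolding m_def by (simp_all add: field_simps)
  define d where "d = a - b"
  define s where "s = a + b"
  have expr: "(w * (a - b) / (1 - exp (-w))) \<bullet> a + ((-w) * (b - a) / (1 - exp w)) \<bullet> b
      = Re m * (d \<bullet> d) + ((w/2) * d) \<bullet> s"
  proof -
    have "(w * (a - b) / (1 - exp (-w))) = P * d" by (simp add: P_def d_def)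
    moreover have "((-w) * (b - a) / (1 - exp w)) = -(Q * d)" by (simp add: Q_def d_def algebra_simps)
    ultimately have "(w * (a - b) / (1 - exp (-w))) \<bullet> a + ((-w) * (b - a) / (1 - exp w)) \<bullet> b
        = (P * d) \<bullet> a + (-(Q * d)) \<bullet> b" by simp
    also have "\<dots> = (m * d) \<bullet> d + ((w/2) * d) \<bullet> s"
      unfolding Pm Qm d_def s_def by (simp add: inner_complex_def algebra_simps) (simp add: field_simps)
    finally have "(w * (a - b) / (1 - exp (-w))) \<bullet> a + ((-w) * (b - a) / (1 - exp w)) \<bullet> b
        = (m * d) \<bullet> d + ((w/2) * d) \<bullet> s" .
    then show ?thesis by (simp add: inner_mult_self)
  qed
  have cs: "((w/2) * d) \<bullet> s \<ge> -(cmod w / 2) * (norm d * norm s)"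
  proof -
    have "\<bar>((w/2) * d) \<bullet> s\<bar> \<le> norm ((w/2) * d) * norm s" by (rule Cauchy_Schwarz_ineq2)
    also have "\<dots> = (cmod w / 2) * (norm d * norm s)" by (simp add: norm_mult)
    finally show ?thesis by linarith
  qed
  have amgm: "norm d * norm s \<le> ((norm d)^2 + (norm s)^2) / 2"
    using sum_squares_bound[of "norm d" "norm s"] by (simp add: power2_eq_square algebra_simps)
  have par: "(norm d)^2 + (norm s)^2 = 2 * (a \<bullet> a + b \<bullet> b)"
    unfolding power2_norm_eq_inner d_def s_def by (simp add: inner_simps inner_commute)
  have "(cmod w / 2) * (norm d * norm s) \<le> (cmod w / 2) * (a \<bullet> a + b \<bullet> b)"
    using amgm par by (intro mult_left_mono) auto
  moreover have "(cmod w / 2) * (a \<bullet> a + b \<bullet> b) \<le> cmod w * (a \<bullet> a + b \<bullet> b)"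
    by (intro mult_right_mono) auto
  moreover have "Re m * (d \<bullet> d) \<ge> 0" using m0 by simp
  ultimately show ?thesis unfolding expr using cs by linarith
qed

definition PS :: "((complex,'n::{finite,linorder}) vec \<Rightarrow> complex) \<Rightarrow> (complex,'n) vec \<Rightarrow> complex" where
  "PS h x = (\<Sum>(i,j)\<in>{(i,j). i < j}. (x$j - x$i) * (h x - h (swapc i j x)) / (1 - exp (-(x$j - x$i))))"

lemma cvec_re_im: "x = cvec (re_vec x) + \<i> *s cvec (im_vec x)"
  by (simp add: vec_eq_iff cvec_def re_vec_def im_vec_def complex_eq_iff)

lemma cinner_cvec_split: "cinner (cvec r) x = complex_of_real (r \<bullet> re_vec x) + \<i> * complex_of_real (r \<bullet> im_vec x)"
proof -
  have "cinner (cvec r) x = (\<Sum>i\<in>UNIV. complex_of_real (r$i * Re (x$i)) + \<i> * complex_of_real (r$i * Im (x$i)))"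
    unfolding cinner_def by (rule sum.cong) (auto simp: cvec_def complex_eq_iff)
  also have "\<dots> = complex_of_real (r \<bullet> re_vec x) + \<i> * complex_of_real (r \<bullet> im_vec x)"
    by (simp add: sum.distrib inner_vec_def re_vec_def im_vec_def sum_distrib_left)
  finally show ?thesis .
qed

lemma cinner_lin: "cinner l (a + c *s b) = cinner l a + c * cinner l b"
  by (simp add: cinner_def sum.distrib sum_distrib_left algebra_simps)

lemma aux_comb: "(a::complex) * d / e + \<i> * (b * d / e) = (a + \<i> * b) * d / e"
  by (simp add: distrib_right add_divide_distrib)

lemma euler:
  fixes h :: "(complex,'n::{finite,linorder}) vec \<Rightarrow> complex"
  assumes hd: "(h has_derivative L) (at x)" and hom: "\<And>c v. L (c *s v) = c * L v"
    and eig: "\<And>\<xi>. cherD k \<xi> h x = cinner lam (cvec \<xi>) * h x"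
  shows "L x - cinner (cvec (rho k)) x * h x + complex_of_real k * PS h x = cinner lam x * h x"
proof -
  define S where "S \<xi> = (\<Sum>(i,j)\<in>{(i,j). i < j}. complex_of_real (\<xi>$j - \<xi>$i) * (h x - h (swapc i j x)) / (1 - exp (-(x$j - x$i))))" for \<xi> :: "(real,'n) vec"
  have cd: "cherD k \<xi> h x = L (cvec \<xi>) - complex_of_real (rho k \<bullet> \<xi>) * h x + complex_of_real k * S \<xi>" for \<xi>
    unfolding cherD_def S_def dir_deriv[OF hd hom] ..
  define \<xi>1 where "\<xi>1 = re_vec x"
  define \<xi>2 where "\<xi>2 = im_vec x"
  have xe: "x = cvec \<xi>1 + \<i> *s cvec \<xi>2" unfolding \<xi>1_def \<xi>2_def by (rule cvec_re_im)
  have lin: "linear L" using has_derivative_bounded_linear[OF hd] bounded_linear.linear by blast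
  have Lx: "L x = L (cvec \<xi>1) + \<i> * L (cvec \<xi>2)"
    by (subst xe) (simp add: linear_add[OF lin] hom)
  have rx: "cinner (cvec (rho k)) x = complex_of_real (rho k \<bullet> \<xi>1) + \<i> * complex_of_real (rho k \<bullet> \<xi>2)"
    unfolding \<xi>1_def \<xi>2_def by (rule cinner_cvec_split)
  have lx: "cinner lam x = cinner lam (cvec \<xi>1) + \<i> * cinner lam (cvec \<xi>2)"
    by (subst xe) (rule cinner_lin)
  have sx: "S \<xi>1 + \<i> * S \<xi>2 = PS h x"
    unfolding S_def PS_def sum_distrib_left sum.distrib[symmetric]
  proof (rule sum.cong[OF refl])
    fix p assume "p \<in> {(i,j). i < (j::'n)}"
    obtain i j where p: "p = (i,j)" by fastforce
    have xd: "x$j - x$i = complex_of_real (\<xi>1$j - \<xi>1$i) + \<i> * complex_of_real (\<xi>2$j - \<xi>2$i)"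
      by (simp add: \<xi>1_def \<xi>2_def re_vec_def im_vec_def complex_eq_iff)
    show "(case p of (i,j) \<Rightarrow> complex_of_real (\<xi>1$j - \<xi>1$i) * (h x - h (swapc i j x)) / (1 - exp (-(x$j - x$i))))
      + \<i> * (case p of (i,j) \<Rightarrow> complex_of_real (\<xi>2$j - \<xi>2$i) * (h x - h (swapc i j x)) / (1 - exp (-(x$j - x$i))))
      = (case p of (i,j) \<Rightarrow> (x$j - x$i) * (h x - h (swapc i j x)) / (1 - exp (-(x$j - x$i))))"
      unfolding p split aux_comb xd ..
  qed
  have "cinner lam x * h x = cherD k \<xi>1 h x + \<i> * cherD k \<xi>2 h x"
    unfolding eig lx by (simp add: algebra_simps)
  also have "\<dots> = (L (cvec \<xi>1) + \<i> * L (cvec \<xi>2)) - (complex_of_real (rho k \<bullet> \<xi>1) + \<i> * complex_of_real (rho k \<bullet> \<xi>2)) * h x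
      + complex_of_real k * (S \<xi>1 + \<i> * S \<xi>2)"
    unfolding cd by (simp add: algebra_simps)
  also have "\<dots> = L x - cinner (cvec (rho k)) x * h x + complex_of_real k * PS h x"
    unfolding Lx rx sx ..
  finally show ?thesis ..
qed

lemma exp_ne_1: assumes "\<bar>Im w\<bar> < pi" "w \<noteq> 0" shows "exp w \<noteq> 1"
proof
  assume "exp w = 1"
  then obtain n :: int where n: "Re w = 0" "Im w = of_int (2 * n) * pi" by (auto simp: exp_eq_1)
  have "\<bar>of_int (2 * n) * pi\<bar> < pi" using assms(1) n by simp
  then have "\<bar>real_of_int (2 * n)\<bar> < 1" by (simp add: abs_mult)
  then have "n = 0" by linarith
  then show False using n assms(2) by (simp add: complex_eq_iff)
qed

definition dc :: "complex^'n::finite \<Rightarrow> bool" where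
  "dc z \<longleftrightarrow> (\<forall>a b. a \<noteq> b \<longrightarrow> z$a \<noteq> z$b)"

lemma Tdom_exp_ne: "z \<in> Tdom \<Longrightarrow> z$a \<noteq> z$b \<Longrightarrow> exp (z$a - z$b) \<noteq> 1"
  by (rule exp_ne_1) (auto simp: Tdom_char)

lemma reg_dc: "z \<in> Tdom \<Longrightarrow> regular_pt z \<longleftrightarrow> dc z"
  for z :: "complex^'n::{finite,linorder}"
proof
  assume z: "z \<in> Tdom" and r: "regular_pt z"
  show "dc z" unfolding dc_def
  proof (intro allI impI)
    fix a b :: 'n assume "a \<noteq> b"
    then consider "a < b" | "b < a" by (meson neqE)
    then show "z$a \<noteq> z$b"
    proof cases
      case 1
      then have "1 - exp (-(z$b - z$a)) \<noteq> 0" using r by (simp add: regular_pt_def)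
      then show ?thesis by auto
    next
      case 2
      then have "1 - exp (-(z$a - z$b)) \<noteq> 0" using r by (simp add: regular_pt_def)
      then show ?thesis by auto
    qed
  qed
next
  assume z: "z \<in> Tdom" and d: "dc z"
  show "regular_pt z" unfolding regular_pt_def
  proof (intro allI impI)
    fix i j :: 'n assume "i < j"
    then have "z$i \<noteq> z$j" using d by (auto simp: dc_def)
    then have "exp (z$i - z$j) \<noteq> 1" by (rule Tdom_exp_ne[OF z])
    then show "1 - exp (-(z$j - z$i)) \<noteq> 0" by simp
  qed
qed

definition pv :: "('n \<Rightarrow> 'n) \<Rightarrow> complex^'n::finite \<Rightarrow> complex^'n" where
  "pv p y = (\<chi> l. y $ p l)"

definition orb :: "complex^'n::finite \<Rightarrow> (complex^'n) set" where
  "orb y = (\<lambda>p. pv p y) ` {p. p permutes (UNIV::'n set)}"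

lemma finite_orb: "finite (orb y)"
  unfolding orb_def by (intro finite_imageI finite_permutations) simp

lemma orb_self: "y \<in> orb y"
  unfolding orb_def by (rule image_eqI[of _ _ id]) (auto simp: pv_def vec_eq_iff)

lemma orb_swapc: "v \<in> orb y \<Longrightarrow> swapc i j v \<in> orb y"
proof -
  assume "v \<in> orb y"
  then obtain p where p: "p permutes UNIV" "v = pv p y" by (auto simp: orb_def)
  have "swapc i j v = pv (p \<circ> Transposition.transpose i j) y"
    by (simp add: p pv_def swapc_nth vec_eq_iff)
  moreover have "p \<circ> Transposition.transpose i j permutes UNIV"
    by (intro permutes_compose p permutes_swap_id) auto
  ultimately show ?thesis by (auto simp: orb_def)
qed

lemma orb_Tdom: "y \<in> Tdom \<Longrightarrow> v \<in> orb y \<Longrightarrow> v \<in> Tdom"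
  by (auto simp: orb_def pv_def Tdom_char)

lemma orb_dc: "dc y \<Longrightarrow> v \<in> orb y \<Longrightarrow> dc v"
  unfolding orb_def dc_def pv_def
  by (auto dest: permutes_inj simp: inj_eq)

lemma orb_bound: "v \<in> orb y \<Longrightarrow> cmod (v$a) \<le> (\<Sum>l\<in>UNIV. cmod (y$l))"
  by (auto simp: orb_def pv_def intro!: member_le_sum)

lemma dc_scale: "dc v \<Longrightarrow> t \<noteq> 0 \<Longrightarrow> dc (complex_of_real t *s v)"
  by (simp add: dc_def)

lemma bl_rscale: "bounded_linear (\<lambda>s::real. complex_of_real s *s (v::complex^'n::finite))"
proof -
  have "linear (\<lambda>s::real. complex_of_real s *s v)"
    by (rule linearI) (simp_all add: vec_eq_iff algebra_simps scaleR_conv_of_real[where 'a=complex])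
  then show ?thesis by (simp add: linear_conv_bounded_linear)
qed

lemma ray_deriv:
  fixes u :: "complex^'n::finite \<Rightarrow> complex"
  assumes "(u has_derivative L) (at (complex_of_real t *s v))" "\<And>c w. L (c *s w) = c * L w"
  shows "((\<lambda>s. u (complex_of_real s *s v)) has_derivative (\<lambda>h. complex_of_real h * L v)) (at t)"
proof -
  have "((\<lambda>s. u (complex_of_real s *s v)) has_derivative (\<lambda>h. L (complex_of_real h *s v))) (at t)"
    using has_derivative_compose[OF bounded_linear.has_derivative[OF bl_rscale has_derivative_ident] assms(1)]
    by (simp add: o_def)
  then show ?thesis using assms(2) by simp
qed

lemma ray_normsq_deriv:
  fixes u :: "complex^'n::finite \<Rightarrow> complex"
  assumes "(u has_derivative L) (at (complex_of_real t *s v))" "\<And>c w. L (c *s w) = c * L w"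
  shows "((\<lambda>s. u (complex_of_real s *s v) \<bullet> u (complex_of_real s *s v)) has_real_derivative
           (2 * (L v \<bullet> u (complex_of_real t *s v)))) (at t)"
proof -
  note d = ray_deriv[OF assms]
  have "((\<lambda>s. u (complex_of_real s *s v) \<bullet> u (complex_of_real s *s v)) has_derivative
     (\<lambda>h. u (complex_of_real t *s v) \<bullet> (complex_of_real h * L v) + (complex_of_real h * L v) \<bullet> u (complex_of_real t *s v))) (at t)"
    by (rule has_derivative_inner[OF d d])
  moreover have "(\<lambda>h. u (complex_of_real t *s v) \<bullet> (complex_of_real h * L v) + (complex_of_real h * L v) \<bullet> u (complex_of_real t *s v))
     = (*) (2 * (L v \<bullet> u (complex_of_real t *s v)))"
    by (auto simp: fun_eq_iff scaleR_conv_of_real[symmetric] inner_commute)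
  ultimately show ?thesis by (simp add: has_field_derivative_def)
qed

definition Tij :: "((complex,'n::finite) vec \<Rightarrow> complex) \<Rightarrow> 'n \<Rightarrow> 'n \<Rightarrow> (complex,'n) vec \<Rightarrow> complex" where
  "Tij u i j x = (x$j - x$i) * (u x - u (swapc i j x)) / (1 - exp (-(x$j - x$i)))"

lemma PS_Tij: "PS u x = (\<Sum>(i,j)\<in>{(i,j). i < j}. Tij u i j x)"
  by (simp add: PS_def Tij_def)

lemma swapc_scale: "swapc i j (c *s v) = c *s swapc i j v"
  by (simp add: vec_eq_iff swapc_nth)

lemma sum_swap_orb: "(\<Sum>v\<in>orb y. f (swapc i j v)) = (\<Sum>v\<in>orb y. f v)"
  by (rule sum.reindex_bij_witness[of _ "swapc i j" "swapc i j"]) (auto intro: orb_swapc)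

lemma Tij_swap: "Tij u i j (swapc i j x) = (-(x$j - x$i)) * (u (swapc i j x) - u x) / (1 - exp (x$j - x$i))"
  by (simp add: Tij_def swapc_nth)

lemma orb_scale_Tdom: "y \<in> Tdom \<Longrightarrow> v \<in> orb y \<Longrightarrow> 0 \<le> t \<Longrightarrow> t \<le> 1 \<Longrightarrow> complex_of_real t *s v \<in> Tdom"
  using scale_Tdom orb_Tdom by blast

lemma orb_diff_bound:
  assumes "v \<in> orb y" "0 \<le> t"
  shows "cmod ((complex_of_real t *s v)$j - (complex_of_real t *s v)$i) \<le> 2 * t * (\<Sum>l\<in>UNIV. cmod (y$l))"
proof -
  have "cmod ((complex_of_real t *s v)$j - (complex_of_real t *s v)$i) = t * cmod (v$j - v$i)"
    using assms(2) by (simp add: right_diff_distrib[symmetric] norm_mult)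
  also have "cmod (v$j - v$i) \<le> cmod (v$j) + cmod (v$i)" by (rule norm_triangle_ineq4)
  also have "\<dots> \<le> 2 * (\<Sum>l\<in>UNIV. cmod (y$l))" using orb_bound[OF assms(1), of j] orb_bound[OF assms(1), of i] by simp
  finally show ?thesis using assms(2) by (simp add: mult_left_mono)
qed

lemma pair_sum_bound:
  fixes u :: "(complex,'n::{finite,linorder}) vec \<Rightarrow> complex" and y :: "(complex,'n) vec"
  assumes t: "0 < t" "t \<le> 1" and y: "y \<in> Tdom" "dc y" and ij: "i \<noteq> j"
  shows "(\<Sum>v\<in>orb y. Tij u i j (complex_of_real t *s v) \<bullet> u (complex_of_real t *s v))
     \<ge> -(2 * t * (\<Sum>l\<in>UNIV. cmod (y$l))) * (\<Sum>v\<in>orb y. u (complex_of_real t *s v) \<bullet> u (complex_of_real t *s v))"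
proof -
  define M where "M = (\<Sum>l\<in>UNIV. cmod (y$l))"
  define X where "X v = complex_of_real t *s v" for v :: "(complex,'n) vec"
  define A where "A v = u (X v)" for v :: "(complex,'n) vec"
  define N where "N = (\<Sum>v\<in>orb y. A v \<bullet> A v)"
  have pb: "Tij u i j (X v) \<bullet> A v + Tij u i j (X (swapc i j v)) \<bullet> A (swapc i j v)
     \<ge> -(2 * t * M) * (A v \<bullet> A v + A (swapc i j v) \<bullet> A (swapc i j v))" if v: "v \<in> orb y" for v
  proof -
    define x where "x = X v"
    have xT: "x \<in> Tdom" using orb_scale_Tdom[OF y(1) v] t by (simp add: x_def X_def)
    have xd: "dc x" using orb_dc[OF y(2) v] t by (simp add: x_def X_def dc_scale)
    have Xs: "X (swapc i j v) = swapc i j x" by (simp add: X_def x_def swapc_scale)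
    define w where "w = x$j - x$i"
    have neq: "x$j \<noteq> x$i" using xd ij by (auto simp: dc_def)
    have e1: "exp (-w) \<noteq> 1" using Tdom_exp_ne[OF xT, of i j] neq by (simp add: w_def)
    have e2: "exp w \<noteq> 1" using Tdom_exp_ne[OF xT, of j i] neq by (simp add: w_def)
    have imw: "\<bar>Im w\<bar> \<le> pi" using xT by (simp add: Tdom_char w_def less_imp_le)
    have "Tij u i j x \<bullet> u x + Tij u i j (swapc i j x) \<bullet> u (swapc i j x)
       = (w * (u x - u (swapc i j x)) / (1 - exp (-w))) \<bullet> u x + ((-w) * (u (swapc i j x) - u x) / (1 - exp w)) \<bullet> u (swapc i j x)"
      unfolding Tij_swap by (simp add: Tij_def w_def)
    also have "\<dots> \<ge> -(cmod w) * (u x \<bullet> u x + u (swapc i j x) \<bullet> u (swapc i j x))"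
      by (rule pair_bound[OF e1 e2 imw])
    finally have 1: "Tij u i j x \<bullet> u x + Tij u i j (swapc i j x) \<bullet> u (swapc i j x)
       \<ge> -(cmod w) * (u x \<bullet> u x + u (swapc i j x) \<bullet> u (swapc i j x))" .
    have "cmod w \<le> 2 * t * M" unfolding w_def x_def X_def M_def using orb_diff_bound[OF v] t by simp
    then have "-(2 * t * M) * (u x \<bullet> u x + u (swapc i j x) \<bullet> u (swapc i j x))
       \<le> -(cmod w) * (u x \<bullet> u x + u (swapc i j x) \<bullet> u (swapc i j x))"
      by (intro mult_right_mono) auto
    with 1 show ?thesis by (simp add: A_def Xs x_def)
  qed
  have "2 * (\<Sum>v\<in>orb y. Tij u i j (X v) \<bullet> A v)
      = (\<Sum>v\<in>orb y. Tij u i j (X v) \<bullet> A v + Tij u i j (X (swapc i j v)) \<bullet> A (swapc i j v))"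
    by (simp add: sum.distrib sum_swap_orb[where f="\<lambda>v. Tij u i j (X v) \<bullet> A v"])
  also have "\<dots> \<ge> (\<Sum>v\<in>orb y. -(2 * t * M) * (A v \<bullet> A v + A (swapc i j v) \<bullet> A (swapc i j v)))"
    by (rule sum_mono) (rule pb)
  also have "(\<Sum>v\<in>orb y. -(2 * t * M) * (A v \<bullet> A v + A (swapc i j v) \<bullet> A (swapc i j v)))
      = -(2 * t * M) * (\<Sum>v\<in>orb y. A v \<bullet> A v + A (swapc i j v) \<bullet> A (swapc i j v))"
    by (rule sum_distrib_left[symmetric])
  also have "(\<Sum>v\<in>orb y. A v \<bullet> A v + A (swapc i j v) \<bullet> A (swapc i j v)) = N + N"
    by (simp only: sum.distrib sum_swap_orb[where f="\<lambda>v. A v \<bullet> A v"] N_def)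
  finally have "2 * (\<Sum>v\<in>orb y. Tij u i j (X v) \<bullet> A v) \<ge> -(2 * t * M) * (N + N)" .
  then show ?thesis unfolding M_def[symmetric] N_def[symmetric] A_def[symmetric] X_def[symmetric] by (simp add: algebra_simps)
qed

lemma cinner_bound:
  assumes "v \<in> orb y" "0 \<le> t"
  shows "cmod (cinner cc (complex_of_real t *s v)) \<le> t * ((\<Sum>i\<in>UNIV. cmod (cc$i)) * (\<Sum>l\<in>UNIV. cmod (y$l)))"
proof -
  have "cmod (cinner cc (complex_of_real t *s v)) \<le> (\<Sum>i\<in>UNIV. cmod (cc$i * (complex_of_real t * v$i)))"
    unfolding cinner_def by (simp add: norm_sum)
  also have "\<dots> \<le> (\<Sum>i\<in>UNIV. cmod (cc$i) * (t * (\<Sum>l\<in>UNIV. cmod (y$l))))"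
  proof (rule sum_mono)
    fix i
    have "cmod (v$i) \<le> (\<Sum>l\<in>UNIV. cmod (y$l))" by (rule orb_bound[OF assms(1)])
    then have "t * cmod (v$i) \<le> t * (\<Sum>l\<in>UNIV. cmod (y$l))" using assms(2) by (rule mult_left_mono)
    then show "cmod (cc$i * (complex_of_real t * v$i)) \<le> cmod (cc$i) * (t * (\<Sum>l\<in>UNIV. cmod (y$l)))"
      using assms(2) by (simp add: norm_mult mult_left_mono)
  qed
  also have "\<dots> = t * ((\<Sum>i\<in>UNIV. cmod (cc$i)) * (\<Sum>l\<in>UNIV. cmod (y$l)))"
    by (simp only: sum_distrib_right[symmetric]) (simp add: algebra_simps)
  finally show ?thesis .
qed

lemma inner_cmul_le: "((c::complex) * a) \<bullet> a \<le> cmod c * (a \<bullet> a)"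
proof -
  have "(c * a) \<bullet> a = Re c * (a \<bullet> a)" by (rule inner_mult_self)
  also have "\<dots> \<le> cmod c * (a \<bullet> a)" by (intro mult_right_mono complex_Re_le_cmod) simp
  finally show ?thesis .
qed

lemma inner_ofreal_left: "(complex_of_real r * a) \<bullet> b = r * (a \<bullet> b)"
  by (simp add: scaleR_conv_of_real[symmetric])

lemma energy_zero:
  fixes u :: "(complex,'n::{finite,linorder}) vec \<Rightarrow> complex"
    and Lu :: "(complex,'n) vec \<Rightarrow> (complex,'n) vec \<Rightarrow> complex" and cc y :: "(complex,'n) vec"
  assumes k: "k \<ge> 0"
    and der: "\<And>x. x \<in> Tdom \<Longrightarrow> (u has_derivative Lu x) (at x)"
    and hom: "\<And>x c v. x \<in> Tdom \<Longrightarrow> Lu x (c *s v) = c * Lu x v"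
    and eul: "\<And>x. x \<in> Tdom \<Longrightarrow> regular_pt x \<Longrightarrow> Lu x x = cinner cc x * u x - complex_of_real k * PS u x"
    and u0: "u 0 = 0"
    and y: "y \<in> Tdom" "dc y"
  shows "u y = 0"
proof -
  define M where "M = (\<Sum>l\<in>UNIV. cmod (y$l))"
  define B where "B = (\<Sum>i\<in>UNIV. cmod (cc$i)) * M"
  define P where "P = card {(i,j). i < (j::'n)}"
  define C where "C = 2 * B + 4 * k * real P * M"
  define X where "X t v = complex_of_real t *s v" for t and v :: "(complex,'n) vec"
  define N where "N t = (\<Sum>v\<in>orb y. u (X t v) \<bullet> u (X t v))" for t
  define D where "D t = (\<Sum>v\<in>orb y. 2 * (Lu (X t v) v \<bullet> u (X t v)))" for t
  have M0: "M \<ge> 0" by (simp add: M_def sum_nonneg)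
  have XT: "X t v \<in> Tdom" if "t \<in> {0..1}" "v \<in> orb y" for t v
    using orb_scale_Tdom[OF y(1) that(2)] that(1) by (simp add: X_def)
  have Nd: "(N has_real_derivative D t) (at t)" if t: "t \<in> {0..1}" for t
    unfolding N_def D_def
  proof (rule DERIV_sum)
    fix v assume v: "v \<in> orb y"
    show "((\<lambda>s. u (X s v) \<bullet> u (X s v)) has_real_derivative 2 * (Lu (X t v) v \<bullet> u (X t v))) (at t)"
      unfolding X_def by (rule ray_normsq_deriv[OF der hom]) (use XT[OF t v] in \<open>simp_all add: X_def\<close>)
  qed
  have DC: "D t \<le> C * N t" if t: "0 < t" "t < 1" for t
  proof -
    have t01: "t \<in> {0..1}" using t by simp
    have xreg: "regular_pt (X t v)" if v: "v \<in> orb y" for v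
      using reg_dc[OF XT[OF t01 v]] orb_dc[OF y(2) v] t by (simp add: X_def dc_scale)
    have trm: "t * (2 * (Lu (X t v) v \<bullet> u (X t v)))
       = 2 * ((cinner cc (X t v) * u (X t v)) \<bullet> u (X t v)) - 2 * k * (PS u (X t v) \<bullet> u (X t v))"
      if v: "v \<in> orb y" for v
    proof -
      have "t * (2 * (Lu (X t v) v \<bullet> u (X t v))) = 2 * ((complex_of_real t * Lu (X t v) v) \<bullet> u (X t v))"
        by (simp add: inner_ofreal_left)
      also have "complex_of_real t * Lu (X t v) v = Lu (X t v) (X t v)"
        using hom[OF XT[OF t01 v]] by (simp add: X_def)
      also have "\<dots> = cinner cc (X t v) * u (X t v) - complex_of_real k * PS u (X t v)"
        by (rule eul[OF XT[OF t01 v] xreg[OF v]])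
      finally show ?thesis by (simp add: inner_diff_left inner_ofreal_left algebra_simps)
    qed
    have tD: "t * D t = 2 * (\<Sum>v\<in>orb y. (cinner cc (X t v) * u (X t v)) \<bullet> u (X t v))
        - 2 * k * (\<Sum>v\<in>orb y. PS u (X t v) \<bullet> u (X t v))"
      unfolding D_def sum_distrib_left by (simp add: trm sum_subtractf sum_distrib_left)
    have A: "(\<Sum>v\<in>orb y. (cinner cc (X t v) * u (X t v)) \<bullet> u (X t v)) \<le> t * B * N t"
      unfolding N_def sum_distrib_left
    proof (rule sum_mono)
      fix v assume v: "v \<in> orb y"
      have "(cinner cc (X t v) * u (X t v)) \<bullet> u (X t v) \<le> cmod (cinner cc (X t v)) * (u (X t v) \<bullet> u (X t v))"
        by (rule inner_cmul_le)
      also have "\<dots> \<le> t * B * (u (X t v) \<bullet> u (X t v))"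
        using cinner_bound[OF v, of t cc] t by (intro mult_right_mono) (simp_all add: X_def B_def M_def)
      finally show "(cinner cc (X t v) * u (X t v)) \<bullet> u (X t v) \<le> t * B * (u (X t v) \<bullet> u (X t v))" .
    qed
    have Pb: "(\<Sum>v\<in>orb y. PS u (X t v) \<bullet> u (X t v)) \<ge> -(real P * (2 * t * M)) * N t"
    proof -
      have "(\<Sum>v\<in>orb y. PS u (X t v) \<bullet> u (X t v))
          = (\<Sum>(i,j)\<in>{(i,j). i < (j::'n)}. (\<Sum>v\<in>orb y. Tij u i j (X t v) \<bullet> u (X t v)))"
        unfolding PS_Tij inner_sum_left by (subst sum.swap) (simp add: case_prod_unfold)
      also have "\<dots> \<ge> (\<Sum>(i,j)\<in>{(i,j). i < (j::'n)}. -(2 * t * M) * N t)"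
      proof (rule sum_mono)
        fix p assume "p \<in> {(i,j). i < (j::'n)}"
        then obtain i j where p: "p = (i,j)" "i < j" by auto
        show "(case p of (i,j) \<Rightarrow> -(2 * t * M) * N t) \<le> (case p of (i,j) \<Rightarrow> (\<Sum>v\<in>orb y. Tij u i j (X t v) \<bullet> u (X t v)))"
          using pair_sum_bound[of t y i j u] t y p by (simp add: X_def N_def M_def)
      qed
      also have "(\<Sum>(i,j)\<in>{(i,j). i < (j::'n)}. -(2 * t * M) * N t) = -(real P * (2 * t * M)) * N t"
        by (simp add: P_def case_prod_unfold)
      finally show ?thesis .
    qed
    define S1 where "S1 = (\<Sum>v\<in>orb y. (cinner cc (X t v) * u (X t v)) \<bullet> u (X t v))"
    define S2 where "S2 = (\<Sum>v\<in>orb y. PS u (X t v) \<bullet> u (X t v))"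
    have kP: "k * (-(real P * (2 * t * M)) * N t) \<le> k * S2"
      using mult_left_mono[OF Pb k] by (simp add: S2_def)
    have tD': "t * D t = 2 * S1 - 2 * (k * S2)" unfolding tD S1_def S2_def by simp
    have "2 * S1 - 2 * (k * S2) \<le> 2 * (t * B * N t) + 2 * (k * (real P * (2 * t * M)) * N t)"
      using A kP unfolding S1_def[symmetric] by (simp add: algebra_simps)
    then have "t * D t \<le> 2 * (t * B * N t) + 2 * (k * (real P * (2 * t * M)) * N t)" unfolding tD' .
    also have "\<dots> = t * (C * N t)" by (simp add: C_def algebra_simps)
    finally have "t * D t \<le> t * (C * N t)" .
    then show ?thesis using t by simp
  qed
  define g where "g t = exp (- C * t) * N t" for t
  have gd: "(g has_real_derivative ((- C * exp (- C * t)) * N t + D t * exp (- C * t))) (at t)"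
    if "t \<in> {0..1}" for t
  proof -
    have e: "((\<lambda>t. exp (- C * t)) has_real_derivative (- C * exp (- C * t))) (at t)"
      by (auto intro!: derivative_eq_intros)
    show ?thesis unfolding g_def[abs_def] by (rule DERIV_mult[OF e Nd[OF that]])
  qed
  have gcont: "continuous_on {0..1} g"
  proof -
    have "continuous (at t) g" if "t \<in> {0..1}" for t
      using gd[OF that] by (rule DERIV_isCont)
    then show ?thesis by (simp add: continuous_at_imp_continuous_on)
  qed
  have "g 1 \<le> g 0"
  proof (rule DERIV_nonpos_imp_decreasing_open[of 0 1 g])
    fix t :: real assume t: "0 < t" "t < 1"
    have "(- C * exp (- C * t)) * N t + D t * exp (- C * t) = exp (- C * t) * (D t - C * N t)"
      by (simp add: algebra_simps)
    also have "\<dots> \<le> 0" using DC[OF t] by (simp add: mult_nonneg_nonpos)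
    finally show "\<exists>y. (g has_real_derivative y) (at t) \<and> y \<le> 0"
      using gd[of t] t by auto
  qed (use gcont in auto)
  moreover have "g 0 = 0" by (simp add: g_def N_def X_def u0)
  ultimately have "N 1 \<le> 0" by (simp add: g_def mult_le_0_iff)
  moreover have "u y \<bullet> u y \<le> N 1"
  proof -
    have "u (X 1 y) \<bullet> u (X 1 y) \<le> N 1" unfolding N_def
      by (rule member_le_sum[OF orb_self]) (simp_all add: finite_orb)
    then show ?thesis by (simp add: X_def)
  qed
  ultimately have "u y \<bullet> u y \<le> 0" by linarith
  then have "u y \<bullet> u y = 0" using inner_ge_zero[of "u y"] by linarith
  then show ?thesis by simp
qed

lemma aux_diff: "(w::complex) * ((a - b) - (c - d)) / E = w * (a - c) / E - w * (b - d) / E"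
  by (cases "E = 0") (simp_all add: field_simps)

lemma PS_diff: "PS (\<lambda>z. f z - g z) x = PS f x - PS g x"
  unfolding PS_def sum_subtractf[symmetric]
  by (rule sum.cong[OF refl], simp only: case_prod_unfold aux_diff)

lemma cinner_add_left: "cinner (a + b) x = cinner a x + cinner b x"
  by (simp add: cinner_def sum.distrib algebra_simps)

lemma dense_dc:
  fixes y :: "(complex,'n::{finite,linorder}) vec"
  defines "r \<equiv> (\<chi> l. complex_of_nat (cidx l))"
  shows "eventually (\<lambda>e. dc (y + complex_of_real e *s r)) (at (0::real))"
proof -
  have "eventually (\<lambda>e. (y + complex_of_real e *s r)$(fst p) \<noteq> (y + complex_of_real e *s r)$(snd p) \<or> fst p = snd p) (at (0::real))" for p :: "'n \<times> 'n"
  proof (cases "fst p = snd p")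
    case True then show ?thesis by simp
  next
    case False
    define a where "a = fst p"
    define b where "b = snd p"
    have "cidx a \<noteq> cidx b" using False by (metis a_def b_def cidx_inj injD)
    then have ab: "real (cidx a) \<noteq> real (cidx b)" by simp
    define e0 where "e0 = Re (y$b - y$a) / (real (cidx a) - real (cidx b))"
    have "eventually (\<lambda>e. e \<noteq> e0) (at (0::real))" by (rule eventually_neq_at_within)
    then show ?thesis
    proof (rule eventually_mono)
      fix e assume ne: "e \<noteq> e0"
      show "(y + complex_of_real e *s r)$(fst p) \<noteq> (y + complex_of_real e *s r)$(snd p) \<or> fst p = snd p"
      proof (rule disjI1, rule notI)
        assume "(y + complex_of_real e *s r)$(fst p) = (y + complex_of_real e *s r)$(snd p)"
        then have "y$a + complex_of_real (e * real (cidx a)) = y$b + complex_of_real (e * real (cidx b))"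
          by (simp add: r_def a_def b_def)
        then have "Re (y$a) + e * real (cidx a) = Re (y$b) + e * real (cidx b)"
          by (metis Re_complex_of_real plus_complex.simps(1))
        then have "e * (real (cidx a) - real (cidx b)) = Re (y$b - y$a)" by (simp add: algebra_simps)
        then have "e = e0" using ab by (simp add: e0_def field_simps)
        with ne show False by simp
      qed
    qed
  qed
  then have "eventually (\<lambda>e. \<forall>p::'n \<times> 'n. (y + complex_of_real e *s r)$(fst p) \<noteq> (y + complex_of_real e *s r)$(snd p) \<or> fst p = snd p) (at (0::real))"
    by (rule eventually_all_finite)
  then show ?thesis by (rule eventually_mono) (auto simp: dc_def)
qed

lemma Tdom_shift_real: "y \<in> Tdom \<Longrightarrow> y + complex_of_real e *s (\<chi> l. complex_of_nat (cidx l)) \<in> Tdom"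
  by (simp add: Tdom_char)

lemma zero_from_dense:
  fixes u :: "(complex,'n::{finite,linorder}) vec \<Rightarrow> complex"
  assumes y: "y \<in> Tdom" and cont: "isCont u y"
    and z: "\<And>x. x \<in> Tdom \<Longrightarrow> dc x \<Longrightarrow> u x = 0"
  shows "u y = 0"
proof -
  define r :: "(complex,'n) vec" where "r = (\<chi> l. complex_of_nat (cidx l))"
  have c1: "isCont (\<lambda>e::real. y + complex_of_real e *s r) 0"
    by (intro continuous_intros linear_continuous_at bl_rscale)
  have c2: "isCont u ((\<lambda>e::real. y + complex_of_real e *s r) 0)" using cont by simp
  have "isCont (\<lambda>e::real. u (y + complex_of_real e *s r)) 0" by (rule isCont_o2[OF c1 c2])
  then have t1: "(\<lambda>e::real. u (y + complex_of_real e *s r)) \<midarrow>0\<rightarrow> u y" by (simp add: isCont_def)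
  have "eventually (\<lambda>e. u (y + complex_of_real e *s r) = 0) (at (0::real))"
    using dense_dc[of y] unfolding r_def[symmetric]
    by (rule eventually_mono) (rule z[OF Tdom_shift_real[OF y, unfolded r_def[symmetric]]])
  then have t2: "(\<lambda>e::real. u (y + complex_of_real e *s r)) \<midarrow>0\<rightarrow> 0" by (rule tendsto_eventually)
  show ?thesis using LIM_unique[OF t1 t2] .
qed

lemma holo_at:
  fixes f :: "(complex,'n::finite) vec \<Rightarrow> complex"
  assumes "holo_on Tdom f"
  obtains Lf :: "(complex,'n) vec \<Rightarrow> (complex,'n) vec \<Rightarrow> complex" where "\<And>x. x \<in> Tdom \<Longrightarrow> (f has_derivative Lf x) (at x)"
    "\<And>x c v. x \<in> Tdom \<Longrightarrow> Lf x (c *s v) = c * Lf x v"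
proof -
  have "\<forall>x\<in>Tdom. \<exists>L. (f has_derivative L) (at x within Tdom) \<and> (\<forall>c v. L (c *s v) = c * L v)"
    using assms by (simp add: holo_on_def)
  then obtain Lf where Lf: "\<forall>x\<in>Tdom. (f has_derivative Lf x) (at x within Tdom) \<and> (\<forall>c v. Lf x (c *s v) = c * Lf x v)"
    by (rule bchoice[THEN exE]) blast
  show ?thesis
  proof (rule that[of Lf])
    fix x :: "(complex,'n) vec" assume x: "x \<in> Tdom"
    then show "(f has_derivative Lf x) (at x)" using Lf at_within_open[OF x open_Tdom] by metis
    show "Lf x (c *s v) = c * Lf x v" for c v using Lf x by blast
  qed
qed

theorem proposition2p3:
  fixes k :: real and G0 :: "(complex,'n::{finite,linorder}) vec \<Rightarrow> (complex,'n) vec \<Rightarrow> complex"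
    and lam :: "(complex,'n) vec"
  assumes "k \<ge> 0"
    and "G0_props k G0"
    and "\<forall>H. G0_props k H \<longrightarrow> (\<forall>l\<in>C0. \<forall>z\<in>T0. H l z = G0 l z)"
  shows "holo_on Tdom (Gext G0 lam)
    \<and> (\<forall>\<xi>::(real,'n) vec. \<forall>x\<in>Tdom. regular_pt x \<longrightarrow>
          cherD k \<xi> (Gext G0 lam) x = cinner lam (cvec \<xi>) * Gext G0 lam x)
    \<and> Gext G0 lam 0 = 1
    \<and> (\<forall>f. holo_on Tdom f
          \<and> (\<forall>\<xi>::(real,'n) vec. \<forall>x\<in>Tdom. regular_pt x \<longrightarrow> cherD k \<xi> f x = cinner lam (cvec \<xi>) * f x)
          \<and> f 0 = 1
          \<longrightarrow> (\<forall>x\<in>Tdom. f x = Gext G0 lam x))"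
proof -
  have H: "holo2_on (C0 \<times> T0) (\<lambda>(l,z). G0 l z)" using assms(2) by (simp add: G0_props_def)
  have holoG: "holo_on Tdom (Gext G0 lam)" by (rule Gext_holo[OF H])
  have eigG: "\<forall>\<xi>::(real,'n) vec. \<forall>x\<in>Tdom. regular_pt x \<longrightarrow>
          cherD k \<xi> (Gext G0 lam) x = cinner lam (cvec \<xi>) * Gext G0 lam x"
    using Gext_eigen[OF assms(2)] by blast
  have G01: "Gext G0 lam 0 = 1"
  proof -
    have "proj0 lam \<in> C0" by (rule proj0_C0)
    then have "G0 (proj0 lam) 0 = 1" using assms(2) by (simp add: G0_props_def)
    moreover have "ce lam 0 = 0" by (simp add: ce_def cinner_one)
    ultimately show ?thesis by (simp add: Gext_ce)
  qed
  have uniq: "\<forall>x\<in>Tdom. f x = Gext G0 lam x"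
    if hf: "holo_on Tdom f" and ef: "\<forall>\<xi>::(real,'n) vec. \<forall>x\<in>Tdom. regular_pt x \<longrightarrow> cherD k \<xi> f x = cinner lam (cvec \<xi>) * f x"
      and f0: "f 0 = 1" for f
  proof -
    obtain Lf where Lf: "\<And>x. x \<in> Tdom \<Longrightarrow> (f has_derivative Lf x) (at x)"
      "\<And>x c v. x \<in> Tdom \<Longrightarrow> Lf x (c *s v) = c * Lf x v"
      using holo_at[OF hf] by blast
    obtain LG where LG: "\<And>x. x \<in> Tdom \<Longrightarrow> (Gext G0 lam has_derivative LG x) (at x)"
      "\<And>x c v. x \<in> Tdom \<Longrightarrow> LG x (c *s v) = c * LG x v"
      using holo_at[OF holoG] by blast
    define u where "u z = f z - Gext G0 lam z" for z
    define Lu where "Lu x v = Lf x v - LG x v" for x v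
    have der: "(u has_derivative Lu x) (at x)" if "x \<in> Tdom" for x
      unfolding u_def[abs_def] Lu_def using has_derivative_diff[OF Lf(1)[OF that] LG(1)[OF that]] by simp
    have hom: "Lu x (c *s v) = c * Lu x v" if "x \<in> Tdom" for x c v
      using Lf(2)[OF that] LG(2)[OF that] by (simp add: Lu_def algebra_simps)
    have eul: "Lu x x = cinner (lam + cvec (rho k)) x * u x - complex_of_real k * PS u x"
      if x: "x \<in> Tdom" and r: "regular_pt x" for x
    proof -
      have E1: "Lf x x - cinner (cvec (rho k)) x * f x + complex_of_real k * PS f x = cinner lam x * f x"
        by (rule euler[OF Lf(1)[OF x] Lf(2)[OF x]]) (use ef x r in blast)
      have E2: "LG x x - cinner (cvec (rho k)) x * Gext G0 lam x + complex_of_real k * PS (Gext G0 lam) x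
          = cinner lam x * Gext G0 lam x"
        by (rule euler[OF LG(1)[OF x] LG(2)[OF x]]) (use eigG x r in blast)
      have "PS u x = PS f x - PS (Gext G0 lam) x" unfolding u_def[abs_def] by (rule PS_diff)
      then show ?thesis unfolding Lu_def u_def cinner_add_left using E1 E2 by algebra
    qed
    have u0: "u 0 = 0" by (simp add: u_def f0 G01)
    have zdc: "u x = 0" if "x \<in> Tdom" "dc x" for x
      by (rule energy_zero[OF assms(1) der hom eul u0 that])
    have "u x = 0" if x: "x \<in> Tdom" for x
    proof (rule zero_from_dense[OF x _ zdc])
      show "isCont u x" using der[OF x] by (rule has_derivative_continuous)
    qed
    then show ?thesis by (simp add: u_def)
  qed
  show ?thesis using holoG eigG G01 uniq by blast
qed

end
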